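(* Let $x$ be an allocation rule and suppose Assumptions D, X and T hold. Fix $i$ and $\theta$ with $0<X_i(\theta)<1$. Let $\bar t_i^w(\theta),\bar t_i^l(\theta)\in\mathbb{R}$ satisfy $\alpha\bar t_i^w(\theta)-\beta\bar t_i^l(\theta)\le K$ and $\theta-\bar t_i^w(\theta)<-\bar t_i^l(\theta)$, and let $\bar t_i(\theta,\cdot):=\bar t_i^w(\theta)x_i(\theta,\cdot)+\bar t_i^l(\theta)(1-x_i(\theta,\cdot))$. Then there exist $\widetilde t_i^w(\theta),\widetilde t_i^l(\theta)\in\mathbb{R}$ such that, with $\widetilde t_i(\theta,\cdot):=\widetilde t_i^w(\theta)x_i(\theta,\cdot)+\widetilde t_i^l(\theta)(1-x_i(\theta,\cdot))$: (i) $\widetilde T_i(\theta)\ge\bar T_i(\theta)$; (ii) $\widetilde U_i^{\min}(\theta)=\bar U_i^{\min}(\theta)$; (iii) $\alpha\widetilde t_i^w(\theta)-\beta\widetilde t_i^l(\theta)\le K$; (iv) $\theta-\widetilde t_i^w(\theta)=-\widetilde t_i^l(\theta)$. Here for an interim transfer $s(\cdot)$ (either $\bar t_i(\theta,\cdot)$ or $\widetilde t_i(\theta,\cdot)$) the interim revenue is $\int_\Theta s(\theta')dP(\theta')$ and the interim worst-case utility is $\inf_Q\{\int_\Theta[\theta x_i(\theta,\theta')-s(\theta')]dQ(\theta'):D(Q\|P)\le\eta\}$.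
   Context: $\Theta=[\underline\theta,\bar\theta]$ with $0<\underline\theta<\bar\theta$, Borel $\sigma$-algebra $\mathcal{B}$; "$\sigma$-algebra" means sub-$\sigma$-algebra of $\mathcal{B}$; $\Delta(\Theta,\mathcal{A})$ is the set of probability measures on $(\Theta,\mathcal{A})$; $P_{\mathcal{E}}$ is restriction. A divergence $D$ assigns to each pair $Q,P$ of probability measures on a common $\sigma$-algebra a value in $[0,\infty]$. Assumption D: for every $\sigma$-algebra $\mathcal{A}$, $P,Q\in\Delta(\Theta,\mathcal{A})$: (D1) $D(Q\|P)=0$ if $Q=P$; (D2) if $Q\ll P$ with bounded $dQ/dP$, $\epsilon\mapsto D(\epsilon Q+(1-\epsilon)P\|P)$ is continuous on $[0,1]$; (D3) $D(Q\|P)<\infty\Rightarrow Q\ll P$; (D4) $D(Q_{\mathcal{E}}\|P_{\mathcal{E}})\le D(Q\|P)$ for sub-$\sigma$-algebras $\mathcal{E}\subset\mathcal{A}$; (D5) equality in (D4) when $dQ_{\mathcal{E}}/dP_{\mathcal{E}}=dQ/dP$ $P$-a.e. Fix atomless $P\in\Delta(\Theta,\mathcal{B})$ and $\eta>0$; $Q$ ranges over $\Delta(\Theta,\mathcal{B})$. Two bidders $i\in\{1,2\}$; an allocation rule is bounded measurable $x=(x_1,x_2):\Theta^2\to\mathbb{R}^2$ with $x_1(\theta,\theta')\ge0$, $x_2(\theta',\theta)\ge0$, $x_1(\theta,\theta')+x_2(\theta',\theta)\le1$. $X_i(\theta)=\int x_i(\theta,\theta')dP(\theta')$, $X_i^{\min}(\theta)=\inf_Q\{\int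 x_i(\theta,\theta')dQ(\theta'):D(Q\|P)\le\eta\}$. Assumption X: (i) $x_i(\theta,\theta')\in\{0,1\}$ for $\theta'\ne\theta$; (ii) $X_i(\theta)=1\Rightarrow\theta=\bar\theta$; (iii) $X_i^{\min}$ non-decreasing. Assumption T: constants $0\le\alpha\le\beta\le1$ and $K\ge0$ are given (they define the class of transfer rules $t$ with $\alpha t_i(\theta,\theta^w)-\beta t_i(\theta,\theta^l)\le K$ whenever $\theta<\bar\theta$, $x_i(\theta,\theta^w)=1$, $x_i(\theta,\theta^l)=0$). *)

theory Defs
  imports "HOL-Probability.Probability"
begin

definition borelT :: "real set \<Rightarrow> real measure" where
  "borelT S = restrict_space borel S"

definition sub_sigma :: "real set \<Rightarrow> real set set \<Rightarrow> bool" where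
  "sub_sigma S A \<longleftrightarrow> sigma_algebra S A \<and> A \<subseteq> sets (borelT S)"

definition prob_on :: "real set \<Rightarrow> real set set \<Rightarrow> real measure \<Rightarrow> bool" where
  "prob_on S A Q \<longleftrightarrow> prob_space Q \<and> space Q = S \<and> sets Q = A"

definition restr :: "real measure \<Rightarrow> real set set \<Rightarrow> real measure" where
  "restr P E = measure_of (space P) E (emeasure P)"

definition mix :: "real \<Rightarrow> real measure \<Rightarrow> real measure \<Rightarrow> real measure" where
  "mix e Q P = measure_of (space P) (sets P)
      (\<lambda>B. ennreal e * emeasure Q B + ennreal (1 - e) * emeasure P B)"

definition assumption_D :: "real set \<Rightarrow> (real measure \<Rightarrow> real measure \<Rightarrow> ennreal) \<Rightarrow> bool" where
  "assumption_D S D \<longleftrightarrow>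
     (\<forall>A P Q. sub_sigma S A \<and> prob_on S A P \<and> prob_on S A Q \<longrightarrow>
        (Q = P \<longrightarrow> D Q P = 0)
      \<and> (absolutely_continuous P Q \<and> (\<exists>C::real. AE t in P. RN_deriv P Q t \<le> ennreal C)
           \<longrightarrow> continuous_on {0..1} (\<lambda>e. D (mix e Q P) P))
      \<and> (D Q P < \<infinity> \<longrightarrow> absolutely_continuous P Q)
      \<and> (\<forall>E. sub_sigma S E \<and> E \<subseteq> A \<longrightarrow>
            D (restr Q E) (restr P E) \<le> D Q P
          \<and> (absolutely_continuous P Q \<and>
             (AE t in P. RN_deriv (restr P E) (restr Q E) t = RN_deriv P Q t)
              \<longrightarrow> D (restr Q E) (restr P E) = D Q P)))"

definition atomless :: "real measure \<Rightarrow> bool" where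
  "atomless P \<longleftrightarrow> (\<forall>A\<in>sets P. 0 < measure P A \<longrightarrow>
      (\<exists>B\<in>sets P. B \<subseteq> A \<and> 0 < measure P B \<and> measure P B < measure P A))"

text \<open>Allocation rule x i t t' (bidder i in {1,2}, own type t, opponent type t').\<close>
definition allocation_rule :: "real set \<Rightarrow> (nat \<Rightarrow> real \<Rightarrow> real \<Rightarrow> real) \<Rightarrow> bool" where
  "allocation_rule S x \<longleftrightarrow>
     (\<forall>i\<in>{1,2}. (\<lambda>p. x i (fst p) (snd p)) \<in> borel_measurable (borelT S \<Otimes>\<^sub>M borelT S)
        \<and> (\<exists>B. \<forall>t\<in>S. \<forall>t'\<in>S. \<bar>x i t t'\<bar> \<le> B))
   \<and> (\<forall>t\<in>S. \<forall>t'\<in>S. x 1 t t' \<ge> 0 \<and> x 2 t' t \<ge> 0 \<and> x 1 t t' + x 2 t' t \<le> 1)"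

definition Qset :: "real set \<Rightarrow> (real measure \<Rightarrow> real measure \<Rightarrow> ennreal) \<Rightarrow> real measure
    \<Rightarrow> real \<Rightarrow> real measure set" where
  "Qset S D P \<eta> = {Q. prob_on S (sets (borelT S)) Q \<and> D Q P \<le> ennreal \<eta>}"

definition Xint :: "real measure \<Rightarrow> (nat \<Rightarrow> real \<Rightarrow> real \<Rightarrow> real) \<Rightarrow> nat \<Rightarrow> real \<Rightarrow> real" where
  "Xint P x i t = (\<integral>t'. x i t t' \<partial>P)"

definition Xmin :: "real set \<Rightarrow> (real measure \<Rightarrow> real measure \<Rightarrow> ennreal) \<Rightarrow> real measure
    \<Rightarrow> real \<Rightarrow> (nat \<Rightarrow> real \<Rightarrow> real \<Rightarrow> real) \<Rightarrow> nat \<Rightarrow> real \<Rightarrow> real" where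
  "Xmin S D P \<eta> x i t = (INF Q\<in>Qset S D P \<eta>. \<integral>t'. x i t t' \<partial>Q)"

definition assumption_X :: "real set \<Rightarrow> real \<Rightarrow> (real measure \<Rightarrow> real measure \<Rightarrow> ennreal)
    \<Rightarrow> real measure \<Rightarrow> real \<Rightarrow> (nat \<Rightarrow> real \<Rightarrow> real \<Rightarrow> real) \<Rightarrow> bool" where
  "assumption_X S hi D P \<eta> x \<longleftrightarrow>
     (\<forall>i\<in>{1,2}.
        (\<forall>t\<in>S. \<forall>t'\<in>S. t' \<noteq> t \<longrightarrow> x i t t' \<in> {0, 1})
      \<and> (\<forall>t\<in>S. Xint P x i t = 1 \<longrightarrow> t = hi)
      \<and> mono_on S (Xmin S D P \<eta> x i))"

definition revenue :: "real measure \<Rightarrow> (real \<Rightarrow> real) \<Rightarrow> real" where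
  "revenue P s = (\<integral>t'. s t' \<partial>P)"

definition Umin :: "real set \<Rightarrow> (real measure \<Rightarrow> real measure \<Rightarrow> ennreal) \<Rightarrow> real measure
    \<Rightarrow> real \<Rightarrow> (nat \<Rightarrow> real \<Rightarrow> real \<Rightarrow> real) \<Rightarrow> nat \<Rightarrow> real \<Rightarrow> (real \<Rightarrow> real) \<Rightarrow> real" where
  "Umin S D P \<eta> x i t s = (INF Q\<in>Qset S D P \<eta>. \<integral>t'. (t * x i t t' - s t') \<partial>Q)"

end

theory Submission
  imports Defs
begin

lemma aux_int:
  fixes f :: "real \<Rightarrow> real"
  assumes "prob_space Q" "f \<in> borel_measurable Q" "\<forall>t\<in>space Q. \<bar>f t\<bar> \<le> C"
  shows "integrable Q f \<and> -C \<le> integral\<^sup>L Q f"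
proof -
  interpret prob_space Q by fact
  have I: "integrable Q f"
    by (rule integrable_const_bound[where B=C]) (use assms in auto)
  have "integral\<^sup>L Q (\<lambda>_. -C) \<le> integral\<^sup>L Q f"
    by (rule integral_mono) (use I assms in \<open>auto simp: abs_le_iff\<close>)
  then show ?thesis using I by (simp add: prob_space)
qed

lemma aux_lin:
  fixes f :: "real \<Rightarrow> real"
  assumes "prob_space Q" "integrable Q f"
  shows "integral\<^sup>L Q (\<lambda>t. a + b * f t) = a + b * integral\<^sup>L Q f"
proof -
  interpret prob_space Q by fact
  show ?thesis using assms(2) by (simp add: integral_add prob_space)
qed

theorem lemma3:
  fixes lo hi \<eta> \<alpha> \<beta> K \<theta> tw tl :: real
    and D :: "real measure \<Rightarrow> real measure \<Rightarrow> ennreal"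
    and P :: "real measure"
    and x :: "nat \<Rightarrow> real \<Rightarrow> real \<Rightarrow> real"
    and i :: nat
  assumes Theta: "0 < lo" "lo < hi"
    and D: "assumption_D {lo..hi} D"
    and P: "prob_on {lo..hi} (sets (borelT {lo..hi})) P" "atomless P"
    and eta: "\<eta> > 0"
    and alloc: "allocation_rule {lo..hi} x"
    and X: "assumption_X {lo..hi} hi D P \<eta> x"
    and T: "0 \<le> \<alpha>" "\<alpha> \<le> \<beta>" "\<beta> \<le> 1" "0 \<le> K"
    and i: "i \<in> {1, 2}"
    and \<theta>: "\<theta> \<in> {lo..hi}" "0 < Xint P x i \<theta>" "Xint P x i \<theta> < 1"
    and tbar: "\<alpha> * tw - \<beta> * tl \<le> K" "\<theta> - tw < - tl"
  shows "\<exists>tw' tl' :: real.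
     revenue P (\<lambda>t'. tw' * x i \<theta> t' + tl' * (1 - x i \<theta> t'))
       \<ge> revenue P (\<lambda>t'. tw * x i \<theta> t' + tl * (1 - x i \<theta> t'))
   \<and> Umin {lo..hi} D P \<eta> x i \<theta> (\<lambda>t'. tw' * x i \<theta> t' + tl' * (1 - x i \<theta> t'))
       = Umin {lo..hi} D P \<eta> x i \<theta> (\<lambda>t'. tw * x i \<theta> t' + tl * (1 - x i \<theta> t'))
   \<and> \<alpha> * tw' - \<beta> * tl' \<le> K
   \<and> \<theta> - tw' = - tl'"
proof -
  define S where "S = {lo..hi}"
  define g where "g = x i \<theta>"
  define c where "c = \<theta> - tw + tl"
  have c: "c < 0" using tbar(2) by (simp add: c_def)
  have spB: "space (borelT S) = S" by (simp add: borelT_def space_restrict_space)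
  obtain B where B: "\<forall>t\<in>S. \<forall>t'\<in>S. \<bar>x i t t'\<bar> \<le> B"
    and mx: "(\<lambda>p. x i (fst p) (snd p)) \<in> borel_measurable (borelT S \<Otimes>\<^sub>M borelT S)"
    using alloc i unfolding allocation_rule_def S_def by blast
  have gm: "g \<in> borel_measurable (borelT S)"
    using measurable_Pair2[OF mx, of \<theta>] \<theta>(1) spB by (simp add: g_def S_def)
  have gB: "\<forall>t\<in>S. \<bar>g t\<bar> \<le> B" using B \<theta>(1) by (simp add: g_def S_def)
  have Qgood: "prob_space Q \<and> space Q = S \<and> g \<in> borel_measurable Q" if "Q \<in> Qset S D P \<eta>" for Q
  proof -
    have "prob_space Q" "space Q = S" "sets Q = sets (borelT S)"
      using that by (auto simp: Qset_def prob_on_def)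
    moreover have "g \<in> borel_measurable Q"
      using gm measurable_cong_sets[OF \<open>sets Q = sets (borelT S)\<close>, of borel borel] by metis
    ultimately show ?thesis by simp
  qed
  have Qint: "integrable Q g" if "Q \<in> Qset S D P \<eta>" for Q
    using aux_int[of Q g B] Qgood[OF that] gB by auto
  have PQ: "P \<in> Qset S D P \<eta>"
  proof -
    have ss: "sub_sigma S (sets (borelT S))"
      unfolding sub_sigma_def using sets.sigma_algebra_axioms[of "borelT S"] spB by simp
    have pp: "prob_on S (sets (borelT S)) P" using P(1) by (simp add: S_def)
    have "D P P = 0" using D ss pp unfolding assumption_D_def S_def by blast
    then show ?thesis using pp eta by (simp add: Qset_def)
  qed
  define u where "u = Umin S D P \<eta> x i \<theta> (\<lambda>t'. tw * x i \<theta> t' + tl * (1 - x i \<theta> t'))"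
  have fe: "(\<lambda>t'. \<theta> * x i \<theta> t' - (tw * x i \<theta> t' + tl * (1 - x i \<theta> t'))) = (\<lambda>t'. - tl + c * g t')"
    by (rule ext) (simp add: g_def c_def algebra_simps)
  have bdd: "bdd_below ((\<lambda>Q. integral\<^sup>L Q (\<lambda>t'. - tl + c * g t')) ` Qset S D P \<eta>)"
  proof (rule bdd_belowI2[where m="-(\<bar>tl\<bar> + \<bar>c\<bar> * B)"])
    fix Q assume Q: "Q \<in> Qset S D P \<eta>"
    have "\<forall>t\<in>space Q. \<bar>- tl + c * g t\<bar> \<le> \<bar>tl\<bar> + \<bar>c\<bar> * B"
    proof
      fix t assume "t \<in> space Q"
      then have "\<bar>g t\<bar> \<le> B" using gB Qgood[OF Q] by auto
      then have "\<bar>c * g t\<bar> \<le> \<bar>c\<bar> * B" by (simp add: abs_mult mult_left_mono)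
      then show "\<bar>- tl + c * g t\<bar> \<le> \<bar>tl\<bar> + \<bar>c\<bar> * B" by linarith
    qed
    then show "-(\<bar>tl\<bar> + \<bar>c\<bar> * B) \<le> integral\<^sup>L Q (\<lambda>t'. - tl + c * g t')"
      using aux_int[of Q "\<lambda>t'. - tl + c * g t'" "\<bar>tl\<bar> + \<bar>c\<bar> * B"] Qgood[OF Q] by auto
  qed
  have u_le: "u \<le> - tl + c * Xint P x i \<theta>"
  proof -
    have "u = (INF Q\<in>Qset S D P \<eta>. integral\<^sup>L Q (\<lambda>t'. - tl + c * g t'))"
      unfolding u_def Umin_def fe ..
    also have "\<dots> \<le> integral\<^sup>L P (\<lambda>t'. - tl + c * g t')"
      by (rule cINF_lower[OF bdd PQ])
    also have "\<dots> = - tl + c * Xint P x i \<theta>"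
      using aux_lin[of P g "- tl" c] Qgood[OF PQ] Qint[OF PQ] by (simp only: Xint_def g_def)
    finally show ?thesis .
  qed
  define tl' where "tl' = - u"
  define tw' where "tw' = \<theta> - u"
  have XP: "Xint P x i \<theta> = integral\<^sup>L P g" by (simp add: Xint_def g_def)
  have r1: "revenue P (\<lambda>t'. tw' * x i \<theta> t' + tl' * (1 - x i \<theta> t')) = tl' + (tw' - tl') * Xint P x i \<theta>"
  proof -
    have "(\<lambda>t'. tw' * x i \<theta> t' + tl' * (1 - x i \<theta> t')) = (\<lambda>t'. tl' + (tw' - tl') * g t')"
      by (rule ext) (simp add: g_def algebra_simps)
    then show ?thesis unfolding revenue_def XP
      using aux_lin[of P g tl' "tw' - tl'"] Qgood[OF PQ] Qint[OF PQ] by simp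
  qed
  have r2: "revenue P (\<lambda>t'. tw * x i \<theta> t' + tl * (1 - x i \<theta> t')) = tl + (tw - tl) * Xint P x i \<theta>"
  proof -
    have "(\<lambda>t'. tw * x i \<theta> t' + tl * (1 - x i \<theta> t')) = (\<lambda>t'. tl + (tw - tl) * g t')"
      by (rule ext) (simp add: g_def algebra_simps)
    then show ?thesis unfolding revenue_def XP
      using aux_lin[of P g tl "tw - tl"] Qgood[OF PQ] Qint[OF PQ] by simp
  qed
  have U2: "Umin S D P \<eta> x i \<theta> (\<lambda>t'. tw' * x i \<theta> t' + tl' * (1 - x i \<theta> t')) = u"
  proof -
    have fe2: "(\<lambda>t'. \<theta> * x i \<theta> t' - (tw' * x i \<theta> t' + tl' * (1 - x i \<theta> t'))) = (\<lambda>t'. u)"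
      by (rule ext) (simp add: tw'_def tl'_def algebra_simps)
    have "\<And>Q. Q \<in> Qset S D P \<eta> \<Longrightarrow> integral\<^sup>L Q (\<lambda>t'. u) = u"
    proof -
      fix Q assume "Q \<in> Qset S D P \<eta>"
      then have "prob_space Q" using Qgood by blast
      then show "integral\<^sup>L Q (\<lambda>t'. u) = u" by (simp add: prob_space.prob_space)
    qed
    then have "(INF Q\<in>Qset S D P \<eta>. integral\<^sup>L Q (\<lambda>t'. u)) = (INF Q\<in>Qset S D P \<eta>. u)"
      by (intro INF_cong) auto
    also have "\<dots> = u" using PQ by (intro cINF_const) auto
    finally show ?thesis unfolding Umin_def fe2 .
  qed
  have X0: "0 \<le> Xint P x i \<theta>" using \<theta>(2) by simp
  have k: "\<alpha> * tw' - \<beta> * tl' \<le> K"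
  proof -
    have "\<alpha> * tw' - \<beta> * tl' = \<alpha> * \<theta> + (\<beta> - \<alpha>) * u" by (simp add: tw'_def tl'_def algebra_simps)
    also have "\<dots> \<le> \<alpha> * \<theta> + (\<beta> - \<alpha>) * (- tl + c * Xint P x i \<theta>)"
      using u_le T by (simp add: mult_left_mono)
    also have "\<dots> \<le> \<alpha> * tw - \<beta> * tl"
    proof -
      have "0 \<le> (\<beta> - \<alpha>) * Xint P x i \<theta> + \<alpha>" using T X0 by simp
      then have "c * ((\<beta> - \<alpha>) * Xint P x i \<theta> + \<alpha>) \<le> 0" using c by (simp add: mult_nonpos_nonneg)
      then show ?thesis by (simp add: c_def algebra_simps)
    qed
    finally show ?thesis using tbar(1) by linarith
  qed
  have rev: "tl + (tw - tl) * Xint P x i \<theta> \<le> tl' + (tw' - tl') * Xint P x i \<theta>"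
    using u_le by (simp add: tw'_def tl'_def c_def algebra_simps)
  show ?thesis
    apply (rule exI[of _ tw'], rule exI[of _ tl'])
    using r1 r2 rev U2 k unfolding u_def S_def by (simp add: tw'_def tl'_def)
qed

end
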